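(* Let $(A,+)$ be a finite abelian group with a fixed standard ppc-basis $e_1,\dots,e_r$, and let $\varepsilon_1,\varepsilon_2\in\mathrm{End}(A,+)$. Then $\varepsilon_1,\varepsilon_2$ are idempotent and commute with each other (under composition) if and only if there exist idempotent diagonal endomorphisms $\delta_1,\delta_2$ of $A$ and an automorphism $\alpha\in\mathrm{Aut}(A,+)$ with $\alpha^{-1}\varepsilon_1\alpha=\delta_1$ and $\alpha^{-1}\varepsilon_2\alpha=\delta_2$.
   Context: Every finite abelian group $A$ is a direct sum of cyclic groups of prime power order. A ppc-basis (prime power cyclic basis) of $A$ is a set $\{x_1,\dots,x_r\}$ of elements with $A=\langle x_1\rangle\oplus\cdots\oplus\langle x_r\rangle$ and each $\langle x_i\rangle$ cyclic of prime power order; the number $r$ (an isomorphism invariant) is the ppc-rank of $A$. Fix one such basis $e_1,\dots,e_r$, the standard ppc-basis. An endomorphism $\delta$ of $A$ is diagonal if for each $i$ there is $d_i\in\mathbb{Z}_{|e_i|}$ with $\delta(e_i)=d_ie_i$. An endomorphism $\varepsilon$ is idempotent if $\varepsilon\circ\varepsilon=\varepsilon$. Maps are composed as functions: $\alpha\beta=\alpha\circ\beta$. *)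

theory Defs
  imports "HOL-Computational_Algebra.Primes"
begin

text \<open>The finite abelian group A is the universe of a finite type of class ab_group_add.\<close>

definition nsmul :: "nat \<Rightarrow> 'a::ab_group_add \<Rightarrow> 'a" where
  "nsmul n x = (((+) x) ^^ n) 0"

definition add_ord :: "'a::ab_group_add \<Rightarrow> nat" where
  "add_ord x = (LEAST n. 0 < n \<and> nsmul n x = 0)"

definition additive_endo :: "('a::ab_group_add \<Rightarrow> 'a) \<Rightarrow> bool" where
  "additive_endo f \<longleftrightarrow> (\<forall>x y. f (x + y) = f x + f y)"

definition additive_auto :: "('a::ab_group_add \<Rightarrow> 'a) \<Rightarrow> bool" where
  "additive_auto f \<longleftrightarrow> additive_endo f \<and> bij f"

definition ppc_basis :: "nat \<Rightarrow> (nat \<Rightarrow> 'a::ab_group_add) \<Rightarrow> bool" where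
  "ppc_basis r e \<longleftrightarrow>
     (\<forall>i<r. \<exists>p k. prime p \<and> 1 \<le> k \<and> add_ord (e i) = p ^ k) \<and>
     (\<forall>x. \<exists>!c::nat \<Rightarrow> nat. (\<forall>i<r. c i < add_ord (e i)) \<and> (\<forall>i\<ge>r. c i = 0) \<and>
            x = (\<Sum>i<r. nsmul (c i) (e i)))"

definition diagonal_endo :: "nat \<Rightarrow> (nat \<Rightarrow> 'a::ab_group_add) \<Rightarrow> ('a \<Rightarrow> 'a) \<Rightarrow> bool" where
  "diagonal_endo r e \<delta> \<longleftrightarrow> additive_endo \<delta> \<and> (\<forall>i<r. \<exists>d::nat. \<delta> (e i) = nsmul d (e i))"

definition idempotent_map :: "('a \<Rightarrow> 'a) \<Rightarrow> bool" where
  "idempotent_map f \<longleftrightarrow> f \<circ> f = f"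

end

theory Submission
  imports Defs "HOL-Number_Theory.Cong"
begin

lemma nsmul_0[simp]: "nsmul 0 x = 0" by (simp add: nsmul_def)
lemma nsmul_Suc[simp]: "nsmul (Suc n) x = x + nsmul n x" by (simp add: nsmul_def)
lemma nsmul_add: "nsmul (m+n) x = nsmul m x + nsmul n x"
  by (induction m) (auto simp: add.assoc)
lemma nsmul_1[simp]: "nsmul 1 x = x" by simp
lemma nsmul_zero[simp]: "nsmul n (0::'a::ab_group_add) = 0" by (induction n) auto
lemma nsmul_plus: "nsmul n (x+y) = nsmul n x + nsmul n (y::'a::ab_group_add)"
  by (induction n) (auto simp: algebra_simps)
lemma nsmul_mult: "nsmul (m*n) x = nsmul m (nsmul n x)"
  by (induction m) (auto simp: nsmul_add)
lemma nsmul_uminus: "nsmul n (-x) = - nsmul n (x::'a::ab_group_add)"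
proof (induction n)
  case (Suc n)
  show ?case by (simp only: nsmul_Suc Suc.IH minus_add_distrib)
qed simp
lemma nsmul_diff: "nsmul n (x - y) = nsmul n x - nsmul n (y::'a::ab_group_add)"
  using nsmul_plus[of n x "-y"] nsmul_uminus[of n y] by simp
lemma nsmul_sum: "nsmul n (sum f A) = (\<Sum>i\<in>A. nsmul n (f i :: 'a::ab_group_add))"
  by (induction A rule: infinite_finite_induct) (auto simp: nsmul_plus)

lemma add_plus: "additive_endo f \<Longrightarrow> f (x+y) = f x + f y"
  unfolding additive_endo_def by blast
lemma add_0: "additive_endo f \<Longrightarrow> f 0 = 0"
proof -
  assume a: "additive_endo f"
  have "f (0+0) = f 0 + f 0" using a by (rule add_plus)
  then show ?thesis by simp
qed
lemma add_uminus: "additive_endo f \<Longrightarrow> f (-x) = - f x"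
proof -
  assume a: "additive_endo f"
  have "f (-x + x) = f (-x) + f x" using a by (rule add_plus)
  then have "f (-x) + f x = 0" using add_0[OF a] by simp
  then show ?thesis by (simp only: eq_neg_iff_add_eq_0)
qed
lemma add_diff: "additive_endo f \<Longrightarrow> f (x-y) = f x - f y"
proof -
  assume a: "additive_endo f"
  have "f (x + - y) = f x + f (-y)" by (rule add_plus[OF a])
  then show ?thesis using add_uminus[OF a, of y] by simp
qed
lemma add_nsmul: "additive_endo f \<Longrightarrow> f (nsmul n x) = nsmul n (f x)"
proof -
  assume a: "additive_endo f"
  show ?thesis
    by (induction n) (simp_all add: add_0[OF a] add_plus[OF a])
qed
lemma add_sum: "additive_endo f \<Longrightarrow> f (sum g A) = (\<Sum>i\<in>A. f (g i))"
proof -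
  assume a: "additive_endo f"
  show ?thesis
    by (induction A rule: infinite_finite_induct) (simp_all add: add_0[OF a] add_plus[OF a])
qed
lemma additive_comp: "additive_endo f \<Longrightarrow> additive_endo g \<Longrightarrow> additive_endo (f \<circ> g)"
  by (simp add: additive_endo_def)

lemma nsmul_exists: "\<exists>n>0. nsmul n (x::'a::{finite,ab_group_add}) = 0"
proof -
  have "\<not> inj (\<lambda>n. nsmul n x)"
  proof
    assume "inj (\<lambda>n. nsmul n x)"
    then have "finite (UNIV::nat set)" using finite_imageD[of "\<lambda>n. nsmul n x" UNIV] by simp
    then show False by simp
  qed
  then obtain i j where ij: "nsmul i x = nsmul j x" "i \<noteq> j" unfolding inj_def by blast
  show ?thesis
  proof (cases "i < j")
    case True
    then have "nsmul j x = nsmul i x + nsmul (j-i) x" by (simp add: nsmul_add[symmetric])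
    then have "nsmul (j-i) x = 0" using ij(1) by (metis add.right_neutral add_left_cancel)
    then show ?thesis using True by (intro exI[of _ "j-i"]) simp
  next
    case False
    then have "nsmul i x = nsmul j x + nsmul (i-j) x" using ij(2) by (simp add: nsmul_add[symmetric])
    then have "nsmul (i-j) x = 0" using ij(1) by (metis add.right_neutral add_left_cancel)
    then show ?thesis using False ij(2) by (intro exI[of _ "i-j"]) simp
  qed
qed

lemma ord_pos: "add_ord (x::'a::{finite,ab_group_add}) > 0"
  and ord_nsmul: "nsmul (add_ord x) x = 0"
  unfolding add_ord_def using LeastI_ex[OF nsmul_exists[of x]] by auto

lemma nsmul_mod: "nsmul n (x::'a::{finite,ab_group_add}) = nsmul (n mod add_ord x) x"
proof -
  have z: "nsmul (n div add_ord x * add_ord x) x = 0" by (simp add: nsmul_mult ord_nsmul)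
  have "nsmul n x = nsmul (n div add_ord x * add_ord x) x + nsmul (n mod add_ord x) x"
    by (metis div_mult_mod_eq nsmul_add)
  then show ?thesis using z by simp
qed

lemma nsmul_eq_0_iff: "nsmul n (x::'a::{finite,ab_group_add}) = 0 \<longleftrightarrow> add_ord x dvd n"
proof
  assume h: "nsmul n x = 0"
  have h1: "nsmul (n mod add_ord x) x = 0" using h nsmul_mod by metis
  have "n mod add_ord x < add_ord x" using ord_pos[of x] by simp
  then have h2: "\<not> (0 < n mod add_ord x \<and> nsmul (n mod add_ord x) x = 0)"
    unfolding add_ord_def by (rule not_less_Least)
  have "\<not> (0 < n mod add_ord x)" using h1 h2 by simp
  then show "add_ord x dvd n" by (simp add: dvd_eq_mod_eq_0)
next
  assume "add_ord x dvd n"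
  then obtain k where "n = k * add_ord x" by (metis dvd_def mult.commute)
  then show "nsmul n x = 0" by (simp add: nsmul_mult ord_nsmul)
qed

lemma neg_nsmul: "- (x::'a::{finite,ab_group_add}) = nsmul (add_ord x - 1) x"
proof -
  have "x + nsmul (add_ord x - 1) x = 0"
    using ord_nsmul[of x] ord_pos[of x] by (metis Suc_diff_1 nsmul_Suc)
  then show ?thesis by (simp add: neg_eq_iff_add_eq_0)
qed

definition sameord :: "'a::ab_group_add \<Rightarrow> 'a \<Rightarrow> bool" where
  "sameord x y \<longleftrightarrow> (\<forall>n. nsmul n x = 0 \<longleftrightarrow> nsmul n y = 0)"

lemma sameord_ord: "sameord x y \<Longrightarrow> add_ord x = add_ord (y::'a::{finite,ab_group_add})"
proof -
  assume "sameord x y"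
  then have h: "\<And>n. add_ord x dvd n \<longleftrightarrow> add_ord y dvd n" unfolding sameord_def by (simp add: nsmul_eq_0_iff)
  show ?thesis using h[of "add_ord x"] h[of "add_ord y"] by (simp add: dvd_antisym)
qed

lemma sameord_trans: "sameord x y \<Longrightarrow> sameord y z \<Longrightarrow> sameord x z"
  and sameord_sym: "sameord x y \<Longrightarrow> sameord y x"
  and sameord_refl: "sameord x x"
  unfolding sameord_def by auto

lemma nsmul_eq_iff: "nsmul a x = nsmul b x \<longleftrightarrow> (if a \<le> b then nsmul (b-a) x = 0 else nsmul (a-b) (x::'a::ab_group_add) = 0)"
proof (cases "a \<le> b")
  case True
  then have "nsmul b x = nsmul a x + nsmul (b-a) x" by (simp add: nsmul_add[symmetric])
  then show ?thesis using True by auto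
next
  case False
  then have "nsmul a x = nsmul b x + nsmul (a-b) x" by (simp add: nsmul_add[symmetric])
  then show ?thesis using False by auto
qed

lemma sameord_eq: "sameord x y \<Longrightarrow> nsmul a x = nsmul b x \<longleftrightarrow> nsmul a y = nsmul b y"
  unfolding sameord_def by (simp only: nsmul_eq_iff)

definition lin :: "nat set \<Rightarrow> (nat \<Rightarrow> 'a::ab_group_add) \<Rightarrow> (nat \<Rightarrow> nat) \<Rightarrow> 'a" where
  "lin I f c = (\<Sum>i\<in>I. nsmul (c i) (f i))"
definition indep :: "nat set \<Rightarrow> (nat \<Rightarrow> 'a::ab_group_add) \<Rightarrow> bool" where
  "indep I f \<longleftrightarrow> (\<forall>c. lin I f c = 0 \<longrightarrow> (\<forall>i\<in>I. nsmul (c i) (f i) = 0))"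
definition span :: "nat set \<Rightarrow> (nat \<Rightarrow> 'a::ab_group_add) \<Rightarrow> 'a set" where
  "span I f = range (lin I f)"
definition pp :: "'a::ab_group_add \<Rightarrow> bool" where
  "pp x \<longleftrightarrow> (\<exists>p k. prime p \<and> 1 \<le> k \<and> add_ord x = p^k)"
definition subgrp :: "'a::ab_group_add set \<Rightarrow> bool" where
  "subgrp S \<longleftrightarrow> 0 \<in> S \<and> (\<forall>x\<in>S. \<forall>y\<in>S. x+y \<in> S) \<and> (\<forall>x\<in>S. -x \<in> S)"

lemma lin_add: "lin I f (\<lambda>i. c i + d i) = lin I f c + lin I f d"
  by (simp add: lin_def nsmul_add sum.distrib)

lemma lin_cong: "(\<And>i. i \<in> I \<Longrightarrow> nsmul (c i) (f i) = nsmul (d i) (g i)) \<Longrightarrow> lin I f c = lin I g d"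
  unfolding lin_def by (rule sum.cong) auto

lemma lin_nsmul: "nsmul n (lin I f c) = lin I f (\<lambda>i. n * c i)"
  by (simp add: lin_def nsmul_sum nsmul_mult)

lemma lin_map: "additive_endo \<pi> \<Longrightarrow> \<pi> (lin I f c) = lin I (\<lambda>i. \<pi> (f i)) c"
  unfolding lin_def by (simp add: add_sum add_nsmul)

lemma lin_remove: "finite I \<Longrightarrow> l \<in> I \<Longrightarrow> lin I f c = nsmul (c l) (f l) + lin (I - {l}) f c"
  unfolding lin_def by (rule sum.remove)

lemma lin_zero: "(\<And>i. i \<in> I \<Longrightarrow> nsmul (c i) (f i) = 0) \<Longrightarrow> lin I f c = 0"
  unfolding lin_def by (rule sum.neutral) auto

lemma lin_single: "finite I \<Longrightarrow> l \<in> I \<Longrightarrow> lin I f (\<lambda>i. if i = l then 1 else 0) = f l"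
proof -
  assume fin: "finite I" and l: "l \<in> I"
  have "lin (I - {l}) f (\<lambda>i. if i = l then 1 else 0) = 0" by (rule lin_zero) auto
  then show ?thesis using lin_remove[OF fin l, of f "\<lambda>i. if i = l then 1 else 0"] by simp
qed

lemma nsmul_neg_coef: "nsmul (c * (add_ord x - Suc 0)) (x::'a::{finite,ab_group_add}) = - nsmul c x"
  by (metis One_nat_def neg_nsmul nsmul_mult nsmul_uminus)

lemma lin_eq:
  fixes f :: "nat \<Rightarrow> 'a::{finite,ab_group_add}"
  assumes ind: "indep I f"
  shows "lin I f c = lin I f d \<longleftrightarrow> (\<forall>i\<in>I. nsmul (c i) (f i) = nsmul (d i) (f i))"
proof
  assume cd: "lin I f c = lin I f d"
  define h where "h i = d i * (add_ord (f i) - Suc 0)" for i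
  have hneg: "nsmul (h i) (f i) = - nsmul (d i) (f i)" for i
    unfolding h_def by (rule nsmul_neg_coef)
  have lh: "lin I f h = - lin I f d"
    unfolding lin_def sum_negf[symmetric] by (rule sum.cong) (simp_all only: hneg)
  have "lin I f (\<lambda>i. c i + h i) = lin I f c + lin I f h" by (rule lin_add)
  also have "\<dots> = 0" unfolding cd lh by simp
  finally have "lin I f (\<lambda>i. c i + h i) = 0" .
  then have z: "\<forall>i\<in>I. nsmul (c i + h i) (f i) = 0" using ind unfolding indep_def by blast
  show "\<forall>i\<in>I. nsmul (c i) (f i) = nsmul (d i) (f i)"
  proof
    fix i assume "i \<in> I"
    then have "nsmul (c i) (f i) + - nsmul (d i) (f i) = 0" using z by (simp only: nsmul_add hneg)
    then show "nsmul (c i) (f i) = nsmul (d i) (f i)" by (metis eq_neg_iff_add_eq_0 minus_minus)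
  qed
next
  assume "\<forall>i\<in>I. nsmul (c i) (f i) = nsmul (d i) (f i)"
  then show "lin I f c = lin I f d" by (intro lin_cong) blast
qed

lemma span_0: "0 \<in> span I f"
proof -
  have "lin I f (\<lambda>_. 0) = 0" by (rule lin_zero) simp
  then show ?thesis unfolding span_def by (metis rangeI)
qed

lemma span_add: "x \<in> span I f \<Longrightarrow> y \<in> span I f \<Longrightarrow> x + y \<in> span I f"
proof -
  assume "x \<in> span I f" "y \<in> span I f"
  then obtain c d where "x = lin I f c" "y = lin I f d" unfolding span_def by blast
  then have "x + y = lin I f (\<lambda>i. c i + d i)" by (simp add: lin_add)
  then show ?thesis unfolding span_def by blast
qed

lemma span_nsmul: "x \<in> span I f \<Longrightarrow> nsmul n x \<in> span I f"
proof -
  assume "x \<in> span I f"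
  then obtain c where "x = lin I f c" unfolding span_def by blast
  then have "nsmul n x = lin I f (\<lambda>i. n * c i)" by (simp add: lin_nsmul)
  then show ?thesis unfolding span_def by blast
qed

lemma span_neg: "x \<in> span I f \<Longrightarrow> - (x::'a::{finite,ab_group_add}) \<in> span I f"
  by (subst neg_nsmul) (rule span_nsmul)

lemma span_diff: "x \<in> span I f \<Longrightarrow> y \<in> span I f \<Longrightarrow> x - (y::'a::{finite,ab_group_add}) \<in> span I f"
  unfolding diff_conv_add_uminus by (intro span_add span_neg)

lemma span_gen: "finite I \<Longrightarrow> i \<in> I \<Longrightarrow> f i \<in> span I f"
proof -
  assume "finite I" "i \<in> I"
  then have "f i = lin I f (\<lambda>j. if j = i then 1 else 0)" by (simp add: lin_single)
  then show ?thesis unfolding span_def by blast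
qed

lemma subgrp_span: "subgrp (span I (f::nat \<Rightarrow> 'a::{finite,ab_group_add}))"
  unfolding subgrp_def by (simp add: span_0 span_add span_neg)

lemma subgrp_nsmul: "subgrp S \<Longrightarrow> x \<in> S \<Longrightarrow> nsmul n x \<in> S"
  unfolding subgrp_def by (induction n) auto

lemma subgrp_sum: "subgrp S \<Longrightarrow> (\<And>i. i \<in> I \<Longrightarrow> g i \<in> S) \<Longrightarrow> sum g I \<in> S"
proof (induction I rule: infinite_finite_induct)
  case (infinite A) then show ?case by (simp add: subgrp_def)
next
  case empty then show ?case by (simp add: subgrp_def)
next
  case (insert x F) then show ?case by (simp add: subgrp_def)
qed

lemma span_sub: "subgrp S \<Longrightarrow> (\<And>i. i \<in> I \<Longrightarrow> f i \<in> S) \<Longrightarrow> span I f \<subseteq> S"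
  unfolding span_def lin_def by (auto intro!: subgrp_sum subgrp_nsmul)

lemma lin_sub_ext: "finite J \<Longrightarrow> I \<subseteq> J \<Longrightarrow> lin I f c = lin J f (\<lambda>i. if i \<in> I then c i else 0)"
  unfolding lin_def by (rule sum.mono_neutral_cong_left) auto

lemma indep_sub: "finite J \<Longrightarrow> indep J f \<Longrightarrow> I \<subseteq> J \<Longrightarrow> indep I f"
  unfolding indep_def
proof (intro allI impI ballI)
  fix c i assume fin: "finite J" and ind: "\<forall>c. lin J f c = 0 \<longrightarrow> (\<forall>i\<in>J. nsmul (c i) (f i) = 0)"
    and IJ: "I \<subseteq> J" and l: "lin I f c = 0" and i: "i \<in> I"
  have "lin J f (\<lambda>i. if i \<in> I then c i else 0) = 0" using lin_sub_ext[OF fin IJ, of f c] l by simp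
  then have "nsmul ((\<lambda>i. if i \<in> I then c i else 0) i) (f i) = 0" using ind IJ i by blast
  then show "nsmul (c i) (f i) = 0" using i by simp
qed

lemma lin_upd_out: "l \<notin> I \<Longrightarrow> lin I (f(l:=b)) c = lin I f c"
  by (rule lin_cong) auto

lemma exchange:
  fixes e :: "nat \<Rightarrow> 'a::{finite,ab_group_add}"
  assumes fin: "finite I" and ind: "indep I e" and ppI: "\<forall>i\<in>I. pp (e i)"
    and jmax: "\<forall>i\<in>I. add_ord (e i) \<le> p^k"
    and p: "prime p" and k: "1 \<le> k"
    and bS: "b \<in> span I e" and ob: "add_ord b = p^k"
  shows "\<exists>l\<in>I. indep I (e(l:=b)) \<and> span I (e(l:=b)) = span I e \<and> add_ord (e l) = p^k"
proof -
  obtain m where bm: "b = lin I e m" using bS unfolding span_def by blast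
  have p1: "p > 1" using p prime_gt_1_nat by blast
  have pk1: "p^(k-1) < p^k" using p1 k by simp
  have pkpos: "p^(k-1) > 0" using p1 by simp
  have "\<not> p^k dvd p^(k-1)" using pk1 pkpos by (meson dvd_imp_le not_le)
  then have nz: "nsmul (p^(k-1)) b \<noteq> 0" by (simp add: nsmul_eq_0_iff ob)
  have "nsmul (p^(k-1)) b = lin I e (\<lambda>i. p^(k-1) * m i)" unfolding bm by (rule lin_nsmul)
  then obtain l where lI: "l \<in> I" and l1: "nsmul (p^(k-1) * m l) (e l) \<noteq> 0"
    using nz lin_zero[of I "\<lambda>i. p^(k-1) * m i" e] by auto
  have "nsmul (p^k) b = 0" using ob ord_nsmul[of b] by simp
  then have "lin I e (\<lambda>i. p^k * m i) = 0" unfolding bm lin_nsmul .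
  then have l2: "nsmul (p^k * m l) (e l) = 0" using ind lI unfolding indep_def by blast
  obtain q s where q: "prime q" and s: "1 \<le> s" and ol: "add_ord (e l) = q^s"
    using ppI lI unfolding pp_def by blast
  have le: "q^s \<le> p^k" using jmax lI ol by auto
  have d1: "\<not> q^s dvd p^(k-1) * m l" using l1 ol by (simp add: nsmul_eq_0_iff)
  have d2: "q^s dvd p^k * m l" using l2 ol by (simp add: nsmul_eq_0_iff)
  have qp: "q = p"
  proof (rule ccontr)
    assume "q \<noteq> p"
    then have "coprime q p" using p q by (simp add: primes_coprime)
    then have "coprime (q^s) (p^k)" by simp
    then have "q^s dvd m l" using d2 by (simp add: coprime_dvd_mult_right_iff)
    then show False using d1 by simp
  qed
  have sk: "s \<le> k" using power_le_imp_le_exp[OF p1, of s k] le unfolding qp by blast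
  have ndvd: "\<not> p dvd m l"
  proof
    assume "p dvd m l"
    then obtain t where t: "m l = p * t" by (auto elim: dvdE)
    obtain k' where kk: "k = Suc k'" using k by (cases k) auto
    have "p^(k-1) * m l = p^k * t" unfolding t kk by simp
    moreover have "p^s dvd p^k * t" using sk by (simp add: le_imp_power_dvd)
    ultimately show False using d1 qp by simp
  qed
  have sk2: "s = k"
  proof (rule ccontr)
    assume "s \<noteq> k"
    then have "s \<le> k - 1" using sk by simp
    then have "p^s dvd p^(k-1) * m l" by (simp add: le_imp_power_dvd)
    then show False using d1 qp by simp
  qed
  have olk: "add_ord (e l) = p^k" using ol qp sk2 by simp
  have cop0: "coprime p (m l)" using p ndvd by (simp add: prime_imp_coprime)
  then have cop: "coprime (p^k) (m l)" by simp
  then have cop': "coprime (m l) (p^k)" by (simp add: coprime_commute)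
  obtain t where t: "[m l * t = Suc 0] (mod p^k)" using cong_solve_coprime_nat[OF cop'] by blast
  have pk_gt1: "p^k > 1" using one_less_power[OF p1, of k] k by simp
  have "(m l * t) mod p^k = 1" using t pk_gt1 k p1 unfolding cong_def by simp
  then have et: "nsmul (m l * t) (e l) = e l" using nsmul_mod[of "m l * t" "e l"] olk by simp
  define e' where "e' = e(l:=b)"
  have e'l: "e' l = b" and e'o: "\<And>i. i \<noteq> l \<Longrightarrow> e' i = e i" unfolding e'_def by auto
  have lin_e': "lin I e' c = nsmul (c l) b + lin I e (c(l:=0))" for c
  proof -
    have "lin I e' c = nsmul (c l) (e' l) + lin (I - {l}) e' c" by (rule lin_remove[OF fin lI])
    also have "lin (I - {l}) e' c = lin (I - {l}) e c" by (rule lin_cong) (simp add: e'o)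
    also have "lin (I - {l}) e c = lin (I - {l}) e (c(l:=0))" by (rule lin_cong) simp
    also have "\<dots> = lin I e (c(l:=0))" using lin_remove[OF fin lI, of e "c(l:=0)"] by simp
    finally show ?thesis using e'l by simp
  qed
  have span1: "span I e' \<subseteq> span I e"
  proof (rule span_sub[OF subgrp_span])
    fix i assume "i \<in> I"
    then show "e' i \<in> span I e" using bS span_gen[OF fin] by (cases "i = l") (auto simp: e'l e'o)
  qed
  have span2: "span I e \<subseteq> span I e'"
  proof (rule span_sub[OF subgrp_span])
    fix i assume iI: "i \<in> I"
    show "e i \<in> span I e'"
    proof (cases "i = l")
      case False then show ?thesis using span_gen[OF fin iI, of e'] by (simp add: e'o)
    next
      case True
      have "nsmul t b = lin I e (\<lambda>i. t * m i)" unfolding bm by (rule lin_nsmul)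
      also have "\<dots> = nsmul (t * m l) (e l) + lin (I - {l}) e (\<lambda>i. t * m i)" by (rule lin_remove[OF fin lI])
      also have "nsmul (t * m l) (e l) = e l" using et by (simp add: mult.commute)
      also have "lin (I - {l}) e (\<lambda>i. t * m i) = lin I e' ((\<lambda>i. t * m i)(l:=0))"
      proof -
        have "lin I e' ((\<lambda>i. t * m i)(l:=0)) = nsmul 0 (e' l) + lin (I - {l}) e' ((\<lambda>i. t * m i)(l:=0))"
          using lin_remove[OF fin lI, of e' "(\<lambda>i. t * m i)(l:=0)"] by simp
        also have "\<dots> = lin (I - {l}) e (\<lambda>i. t * m i)" by (simp, rule lin_cong) (simp add: e'o)
        finally show ?thesis by simp
      qed
      finally have "e l = nsmul t b - lin I e' ((\<lambda>i. t * m i)(l:=0))" by (simp add: algebra_simps)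
      moreover have "nsmul t b \<in> span I e'" using span_gen[OF fin lI, of e'] e'l by (simp add: span_nsmul)
      moreover have "lin I e' ((\<lambda>i. t * m i)(l:=0)) \<in> span I e'" unfolding span_def by blast
      ultimately show ?thesis using True by (simp add: span_diff)
    qed
  qed
  have indep': "indep I e'"
    unfolding indep_def
  proof (intro allI impI ballI)
    fix c i assume c0: "lin I e' c = 0" and iI: "i \<in> I"
    have nb: "nsmul (c l) b = lin I e (\<lambda>i. c l * m i)" unfolding bm by (rule lin_nsmul)
    have s0: "nsmul (c l) b + lin I e (c(l:=0)) = 0" using c0 lin_e'[of c] by simp
    have "lin I e (\<lambda>i. (c(l:=0)) i + c l * m i) = lin I e (c(l:=0)) + nsmul (c l) b"
      unfolding nb by (rule lin_add)
    then have "lin I e (\<lambda>i. (c(l:=0)) i + c l * m i) = 0" by (metis s0 add.commute)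
    then have "nsmul ((c(l:=0)) l + c l * m l) (e l) = 0" using ind lI unfolding indep_def by blast
    then have "p^k dvd c l * m l" using olk by (simp add: nsmul_eq_0_iff)
    then have "p^k dvd c l" using cop by (simp add: coprime_dvd_mult_left_iff)
    then have cb: "nsmul (c l) b = 0" using ob by (simp add: nsmul_eq_0_iff)
    then have "lin I e (c(l:=0)) = 0" using c0 lin_e'[of c] by simp
    then have "\<forall>i\<in>I. nsmul ((c(l:=0)) i) (e i) = 0" using ind unfolding indep_def by blast
    then show "nsmul (c i) (e' i) = 0" using iI cb by (cases "i = l") (auto simp: e'l e'o)
  qed
  show ?thesis using lI indep' span1 span2 olk unfolding e'_def by blast
qed

definition addon :: "'a::ab_group_add set \<Rightarrow> ('a \<Rightarrow> 'a) \<Rightarrow> bool" where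
  "addon S h \<longleftrightarrow> (\<forall>x\<in>S. \<forall>y\<in>S. h (x+y) = h x + h y)"

lemma addon_0: "subgrp S \<Longrightarrow> addon S h \<Longrightarrow> h 0 = 0"
proof -
  assume "subgrp S" "addon S h"
  then have "h (0+0) = h 0 + h 0" unfolding addon_def subgrp_def by blast
  then show ?thesis by simp
qed

lemma addon_nsmul: "subgrp S \<Longrightarrow> addon S h \<Longrightarrow> x \<in> S \<Longrightarrow> h (nsmul n x) = nsmul n (h x)"
proof (induction n)
  case 0 then show ?case using addon_0 by simp
next
  case (Suc n)
  have "h (x + nsmul n x) = h x + h (nsmul n x)"
    using Suc.prems subgrp_nsmul[OF Suc.prems(1,3)] unfolding addon_def by blast
  then show ?case using Suc by simp
qed

lemma addon_sum: "subgrp S \<Longrightarrow> addon S h \<Longrightarrow> (\<And>i. i \<in> I \<Longrightarrow> g i \<in> S) \<Longrightarrow> h (sum g I) = (\<Sum>i\<in>I. h (g i))"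
proof (induction I rule: infinite_finite_induct)
  case (infinite A) then show ?case using addon_0 by simp
next
  case empty then show ?case using addon_0 by simp
next
  case (insert x F)
  have "h (g x + sum g F) = h (g x) + h (sum g F)"
    using insert.prems subgrp_sum[OF insert.prems(1), of F g] unfolding addon_def by blast
  then show ?case using insert by simp
qed

lemma addon_lin: "subgrp S \<Longrightarrow> addon S h \<Longrightarrow> (\<And>i. i \<in> I \<Longrightarrow> g i \<in> S) \<Longrightarrow> h (lin I g c) = lin I (\<lambda>i. h (g i)) c"
  unfolding lin_def
  by (subst addon_sum[of S h]) (auto intro: subgrp_nsmul intro!: sum.cong addon_nsmul)

lemma addon_neg: "subgrp S \<Longrightarrow> addon S h \<Longrightarrow> x \<in> S \<Longrightarrow> h (-x) = - h x"
proof -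
  assume a: "subgrp S" "addon S h" "x \<in> S"
  then have "-x \<in> S" unfolding subgrp_def by blast
  then have "h (-x + x) = h (-x) + h x" using a unfolding addon_def by blast
  then have "h (-x) + h x = 0" using addon_0[OF a(1,2)] by simp
  then show ?thesis by (simp only: eq_neg_iff_add_eq_0)
qed

lemma addon_diff: "subgrp S \<Longrightarrow> addon S h \<Longrightarrow> x \<in> S \<Longrightarrow> y \<in> S \<Longrightarrow> h (x - y) = h x - h y"
proof -
  assume a: "subgrp S" "addon S h" "x \<in> S" "y \<in> S"
  then have "-y \<in> S" unfolding subgrp_def by blast
  then have "h (x + -y) = h x + h (-y)" using a unfolding addon_def by blast
  then show ?thesis using addon_neg[OF a(1,2,4)] by simp
qed

lemma sameord_of_ord: "add_ord x = add_ord y \<Longrightarrow> sameord x (y::'a::{finite,ab_group_add})"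
  unfolding sameord_def by (simp add: nsmul_eq_0_iff)

lemma pp_sameord: "sameord x y \<Longrightarrow> pp y \<Longrightarrow> pp (x::'a::{finite,ab_group_add})"
  unfolding pp_def using sameord_ord by metis

lemma lin_delta: "finite I \<Longrightarrow> i \<in> I \<Longrightarrow> lin I f (\<lambda>j. if j = i then n else 0) = nsmul n (f i)"
proof -
  assume a: "finite I" "i \<in> I"
  have "lin I f (\<lambda>j. if j = i then n else 0) = lin I f (\<lambda>j. n * (if j = i then 1 else 0))"
    by (rule lin_cong) simp
  also have "\<dots> = nsmul n (lin I f (\<lambda>j. if j = i then 1 else 0))" by (simp add: lin_nsmul)
  also have "\<dots> = nsmul n (f i)" by (simp only: lin_single[OF a, of f])
  finally show ?thesis .
qed

definition good :: "nat set \<Rightarrow> (nat \<Rightarrow> 'a::{finite,ab_group_add}) \<Rightarrow> ('a \<Rightarrow> 'a) \<Rightarrow> bool" where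
  "good I e \<pi> \<longleftrightarrow> finite I \<and> indep I e \<and> (\<forall>i\<in>I. pp (e i)) \<and> additive_endo \<pi> \<and>
     (\<forall>x\<in>span I e. \<pi> x \<in> span I e) \<and> (\<forall>x\<in>span I e. \<pi> (\<pi> x) = \<pi> x)"

definition concl :: "nat set \<Rightarrow> (nat \<Rightarrow> 'a::{finite,ab_group_add}) \<Rightarrow> ('a \<Rightarrow> 'a) \<Rightarrow> bool" where
  "concl I e \<pi> \<longleftrightarrow> (\<exists>f. indep I f \<and> span I f = span I e \<and> (\<forall>i\<in>I. sameord (f i) (e i)) \<and>
     (\<forall>i\<in>I. \<pi> (f i) = f i \<or> \<pi> (f i) = 0))"

lemma KL_core:
  fixes e :: "nat \<Rightarrow> 'a::{finite,ab_group_add}"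
  assumes gd: "good I e \<pi>" and lI: "l \<in> I" and pil: "\<pi> (e l) = e l"
    and IH: "\<And>g. good (I - {l}) g \<pi> \<Longrightarrow> concl (I - {l}) g \<pi>"
  shows "concl I e \<pi>"
proof -
  have fin: "finite I" and ind: "indep I e" and ppI: "\<forall>i\<in>I. pp (e i)" and addp: "additive_endo \<pi>"
    and piS: "\<And>x. x \<in> span I e \<Longrightarrow> \<pi> x \<in> span I e"
    and piid: "\<And>x. x \<in> span I e \<Longrightarrow> \<pi> (\<pi> x) = \<pi> x"
    using gd unfolding good_def by auto
  define S where "S = span I e"
  define I' where "I' = I - {l}"
  define b where "b = e l"
  have fin': "finite I'" using fin unfolding I'_def by simp
  have subS: "subgrp S" unfolding S_def by (rule subgrp_span)
  have eS: "\<And>i. i \<in> I \<Longrightarrow> e i \<in> S" unfolding S_def using span_gen[OF fin] by blast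
  have bS: "b \<in> S" unfolding b_def using eS lI by blast
  have pib: "\<pi> b = b" unfolding b_def by (rule pil)
  have linS: "lin I e c \<in> S" for c unfolding S_def span_def by blast
  define crd where "crd x = (SOME c. x = lin I e c)" for x
  have crd: "x = lin I e (crd x)" if "x \<in> S" for x
  proof -
    have "\<exists>c. x = lin I e c" using that unfolding S_def span_def by blast
    then show ?thesis unfolding crd_def by (rule someI_ex)
  qed
  define \<phi> where "\<phi> x = nsmul (crd x l) b" for x
  have philin: "\<phi> (lin I e c) = nsmul (c l) b" for c
  proof -
    have "lin I e (crd (lin I e c)) = lin I e c" using crd[OF linS[of c]] by simp
    then have "nsmul (crd (lin I e c) l) (e l) = nsmul (c l) (e l)" using lin_eq[OF ind] lI by blast
    then show ?thesis unfolding \<phi>_def b_def .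
  qed
  have phiS: "\<phi> x \<in> S" for x unfolding \<phi>_def S_def using bS unfolding S_def by (rule span_nsmul)
  have phiadd: "addon S \<phi>" unfolding addon_def
  proof (intro ballI)
    fix x y assume x: "x \<in> S" and y: "y \<in> S"
    have "x + y = lin I e (\<lambda>i. crd x i + crd y i)" using crd[OF x] crd[OF y] by (simp add: lin_add)
    then have "\<phi> (x + y) = nsmul (crd x l + crd y l) b" using philin by simp
    then show "\<phi> (x + y) = \<phi> x + \<phi> y" unfolding \<phi>_def by (simp add: nsmul_add)
  qed
  have phib: "\<phi> (nsmul n b) = nsmul n b" for n
  proof -
    have "nsmul n b = lin I e (\<lambda>j. if j = l then n else 0)" unfolding b_def by (rule lin_delta[OF fin lI, of e n, symmetric])
    then show ?thesis using philin[of "\<lambda>j. if j = l then n else 0"] by simp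
  qed
  define \<psi> where "\<psi> x = x - \<phi> (\<pi> x)" for x
  have psiS: "\<psi> x \<in> S" if "x \<in> S" for x
    unfolding \<psi>_def using that phiS piS unfolding S_def by (simp add: span_diff)
  have psiadd: "addon S \<psi>" unfolding addon_def
  proof (intro ballI)
    fix x y assume x: "x \<in> S" and y: "y \<in> S"
    have "\<phi> (\<pi> (x + y)) = \<phi> (\<pi> x) + \<phi> (\<pi> y)"
      using add_plus[OF addp, of x y] phiadd piS x y unfolding addon_def S_def by simp
    then show "\<psi> (x + y) = \<psi> x + \<psi> y" unfolding \<psi>_def by (simp add: algebra_simps)
  qed
  have psib: "\<psi> (nsmul n b) = 0" for n
  proof -
    have "\<pi> (nsmul n b) = nsmul n b" using add_nsmul[OF addp, of n b] pib by simp
    then show ?thesis unfolding \<psi>_def using phib by simp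
  qed
  have psib1: "\<psi> b = 0" using psib[of 1] by simp
  have ker: "x = nsmul (crd (\<pi> x) l) b" if "x \<in> S" "\<psi> x = 0" for x
    using that(2) unfolding \<psi>_def \<phi>_def by simp
  have phipipsi: "\<phi> (\<pi> (\<psi> x)) = 0" if x: "x \<in> S" for x
  proof -
    define m where "m = crd (\<pi> x) l"
    have pxS: "\<pi> x \<in> S" using piS x unfolding S_def by blast
    have nbS: "nsmul m b \<in> S" using bS unfolding S_def by (rule span_nsmul)
    have "\<pi> (\<psi> x) = \<pi> x - \<pi> (nsmul m b)" unfolding \<psi>_def \<phi>_def m_def by (rule add_diff[OF addp])
    also have "\<pi> (nsmul m b) = nsmul m b" using add_nsmul[OF addp, of m b] pib by simp
    finally have "\<phi> (\<pi> (\<psi> x)) = \<phi> (\<pi> x) - \<phi> (nsmul m b)"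
      using addon_diff[OF subS phiadd pxS nbS] by simp
    then show ?thesis using phib unfolding \<phi>_def m_def by simp
  qed
  have psipsi: "\<psi> (\<psi> x) = \<psi> x" if "x \<in> S" for x
    using phipipsi[OF that] unfolding \<psi>_def[of "\<psi> x"] by simp
  have pipsi: "\<psi> (\<pi> (\<psi> x)) = \<pi> (\<psi> x)" if x: "x \<in> S" for x
  proof -
    have "\<pi> (\<pi> (\<psi> x)) = \<pi> (\<psi> x)" using piid psiS[OF x] unfolding S_def by blast
    then show ?thesis using phipipsi[OF x] unfolding \<psi>_def[of "\<pi> (\<psi> x)"] by simp
  qed
  define g where "g i = \<psi> (e i)" for i
  define K where "K = span I' g"
  have gS: "g i \<in> S" if "i \<in> I" for i unfolding g_def using psiS eS that by blast
  have KS: "K \<subseteq> S" unfolding K_def by (rule span_sub[OF subS]) (use gS I'_def in blast)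
  have psilin: "\<psi> (lin J e c) = lin J g c" if "J \<subseteq> I" for J c
    unfolding g_def using that eS by (intro addon_lin[OF subS psiadd]) blast
  have K2: "\<psi> x \<in> K" if x: "x \<in> S" for x
  proof -
    have "\<psi> x = lin I g (crd x)" using crd[OF x] psilin[of I "crd x"] by simp
    also have "\<dots> = nsmul (crd x l) (g l) + lin I' g (crd x)" unfolding I'_def by (rule lin_remove[OF fin lI])
    also have "g l = 0" unfolding g_def using psib1 b_def by simp
    finally have "\<psi> x = lin I' g (crd x)" by simp
    then show ?thesis unfolding K_def span_def by blast
  qed
  have K3: "\<psi> x = x" if x: "x \<in> K" for x
  proof -
    obtain c where c: "x = lin I' g c" using x unfolding K_def span_def by blast
    have "\<psi> x = lin I' (\<lambda>i. \<psi> (g i)) c" unfolding c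
      by (rule addon_lin[OF subS psiadd]) (use gS I'_def in blast)
    also have "\<dots> = lin I' g c" by (rule lin_cong) (simp add: g_def psipsi eS I'_def)
    finally show ?thesis using c by simp
  qed
  have Kinj: "\<forall>i\<in>I'. nsmul (c i) (e i) = 0" if z: "\<psi> (lin I' e c) = 0" for c
  proof -
    have II: "I' \<subseteq> I" unfolding I'_def by blast
    have eq1: "lin I' e c = lin I e (\<lambda>i. if i \<in> I' then c i else 0)" by (rule lin_sub_ext[OF fin II])
    then have yS: "lin I' e c \<in> S" using linS by simp
    have "lin I' e c = nsmul (crd (\<pi> (lin I' e c)) l) b" by (rule ker[OF yS z])
    also have "\<dots> = lin I e (\<lambda>j. if j = l then crd (\<pi> (lin I' e c)) l else 0)"
      unfolding b_def by (rule lin_delta[OF fin lI, symmetric])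
    finally have "lin I e (\<lambda>i. if i \<in> I' then c i else 0) = lin I e (\<lambda>j. if j = l then crd (\<pi> (lin I' e c)) l else 0)"
      using eq1 by simp
    then have "\<forall>i\<in>I. nsmul (if i \<in> I' then c i else 0) (e i) = nsmul (if i = l then crd (\<pi> (lin I' e c)) l else 0) (e i)"
      by (subst (asm) lin_eq[OF ind]) simp
    then show ?thesis
    proof (intro ballI)
      fix i assume h: "\<forall>i\<in>I. nsmul (if i \<in> I' then c i else 0) (e i) = nsmul (if i = l then crd (\<pi> (lin I' e c)) l else 0) (e i)"
        and i: "i \<in> I'"
      have "i \<in> I" "i \<noteq> l" using i unfolding I'_def by auto
      then show "nsmul (c i) (e i) = 0" using bspec[OF h, of i] i by simp
    qed
  qed
  have indg: "indep I' g" unfolding indep_def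
  proof (intro allI impI ballI)
    fix c i assume c: "lin I' g c = 0" and i: "i \<in> I'"
    have "\<psi> (lin I' e c) = 0" using psilin[of I' c] c unfolding I'_def by auto
    then have "nsmul (c i) (e i) = 0" using Kinj i by blast
    moreover have "nsmul (c i) (g i) = \<psi> (nsmul (c i) (e i))" unfolding g_def
      using addon_nsmul[OF subS psiadd, of "e i" "c i"] eS i unfolding I'_def by simp
    ultimately show "nsmul (c i) (g i) = 0" using addon_0[OF subS psiadd] by simp
  qed
  have sog: "sameord (g i) (e i)" if i: "i \<in> I'" for i
    unfolding sameord_def
  proof
    fix n
    have iI: "i \<in> I" using i unfolding I'_def by blast
    have gn: "nsmul n (g i) = \<psi> (nsmul n (e i))" unfolding g_def
      using addon_nsmul[OF subS psiadd, of "e i" n] eS iI by simp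
    have en: "nsmul n (e i) = lin I' e (\<lambda>j. if j = i then n else 0)" by (rule lin_delta[OF fin' i, symmetric])
    show "nsmul n (g i) = 0 \<longleftrightarrow> nsmul n (e i) = 0"
    proof
      assume "nsmul n (g i) = 0"
      then have "\<psi> (lin I' e (\<lambda>j. if j = i then n else 0)) = 0" using gn en by simp
      then have "\<forall>j\<in>I'. nsmul ((\<lambda>j. if j = i then n else 0) j) (e j) = 0" by (rule Kinj)
      then show "nsmul n (e i) = 0" using i by auto
    next
      assume "nsmul n (e i) = 0"
      then show "nsmul n (g i) = 0" using gn addon_0[OF subS psiadd] by simp
    qed
  qed
  have goodg: "good I' g \<pi>" unfolding good_def
  proof (intro conjI ballI)
    show "finite I'" by (rule fin')
    show "indep I' g" by (rule indg)
    fix i assume "i \<in> I'"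
    then show "pp (g i)" using sog ppI pp_sameord unfolding I'_def by blast
  next
    show "additive_endo \<pi>" by (rule addp)
  next
    fix x assume x: "x \<in> span I' g"
    then have xK: "x \<in> K" unfolding K_def .
    then have xS: "x \<in> S" using KS by blast
    have "\<pi> x = \<pi> (\<psi> x)" using K3[OF xK] by simp
    also have "\<dots> = \<psi> (\<pi> (\<psi> x))" using pipsi[OF xS] by simp
    finally have "\<pi> x = \<psi> (\<pi> (\<psi> x))" .
    moreover have "\<pi> (\<psi> x) \<in> S" using piS psiS[OF xS] unfolding S_def by blast
    ultimately show "\<pi> x \<in> span I' g" using K2 unfolding K_def by simp
  next
    fix x assume x: "x \<in> span I' g"
    then have "x \<in> S" using KS unfolding K_def by blast
    then show "\<pi> (\<pi> x) = \<pi> x" using piid unfolding S_def by blast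
  qed
  obtain f' where f'ind: "indep I' f'" and f'sp: "span I' f' = K"
    and f'so: "\<forall>i\<in>I'. sameord (f' i) (g i)" and f'pi: "\<forall>i\<in>I'. \<pi> (f' i) = f' i \<or> \<pi> (f' i) = 0"
    using IH[OF goodg[unfolded I'_def]] unfolding concl_def I'_def[symmetric] K_def by blast
  define f where "f = f'(l := b)"
  have fl: "f l = b" and fo: "\<And>i. i \<noteq> l \<Longrightarrow> f i = f' i" unfolding f_def by auto
  have linf: "lin I f c = nsmul (c l) b + lin I' f' c" for c
  proof -
    have "lin I f c = nsmul (c l) (f l) + lin I' f c" unfolding I'_def by (rule lin_remove[OF fin lI])
    also have "lin I' f c = lin I' f' c" by (rule lin_cong) (simp add: fo I'_def)
    finally show ?thesis using fl by simp
  qed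
  have f'K: "f' i \<in> K" if "i \<in> I'" for i using span_gen[OF fin' that, of f'] f'sp by simp
  have sp1: "span I f \<subseteq> S"
  proof (rule span_sub[OF subS])
    fix i assume "i \<in> I"
    then show "f i \<in> S" using bS f'K KS fl fo unfolding I'_def by (cases "i = l") auto
  qed
  have sp2: "S \<subseteq> span I f"
  proof
    fix x assume x: "x \<in> S"
    obtain c where c: "\<psi> x = lin I' f' c" using K2[OF x] f'sp unfolding span_def by blast
    define m where "m = crd (\<pi> x) l"
    have "x = \<psi> x + nsmul m b" unfolding \<psi>_def \<phi>_def m_def by simp
    also have "\<dots> = nsmul m b + lin I' f' (c(l:=m))" unfolding c
      by (simp add: add.commute, rule lin_cong) (simp add: I'_def)
    also have "\<dots> = lin I f (c(l:=m))" using linf[of "c(l:=m)"] by simp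
    finally show "x \<in> span I f" unfolding span_def by blast
  qed
  have indf: "indep I f" unfolding indep_def
  proof (intro allI impI ballI)
    fix c i assume c0: "lin I f c = 0" and i: "i \<in> I"
    define y where "y = lin I' f' c"
    have yK: "y \<in> K" unfolding y_def f'sp[symmetric] span_def by blast
    have s0: "nsmul (c l) b + y = 0" using c0 linf[of c] unfolding y_def by simp
    have nbS: "nsmul (c l) b \<in> S" using bS unfolding S_def by (rule span_nsmul)
    have "\<psi> (nsmul (c l) b + y) = \<psi> (nsmul (c l) b) + \<psi> y"
      using psiadd nbS yK KS unfolding addon_def by blast
    then have "\<psi> 0 = y" using s0 psib K3[OF yK] by simp
    then have y0: "y = 0" using addon_0[OF subS psiadd] by simp
    then have cf': "\<forall>i\<in>I'. nsmul (c i) (f' i) = 0" using f'ind unfolding indep_def y_def by blast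
    have cb: "nsmul (c l) b = 0" using s0 y0 by simp
    show "nsmul (c i) (f i) = 0" using cf' cb i fl fo unfolding I'_def by (cases "i = l") auto
  qed
  show ?thesis unfolding concl_def
  proof (intro exI[of _ f] conjI ballI)
    show "indep I f" by (rule indf)
    show "span I f = span I e" using sp1 sp2 unfolding S_def by blast
  next
    fix i assume i: "i \<in> I"
    show "sameord (f i) (e i)"
    proof (cases "i = l")
      case True then show ?thesis using fl b_def sameord_refl by simp
    next
      case False
      then have "i \<in> I'" using i unfolding I'_def by blast
      then show ?thesis using f'so sog fo[OF False] sameord_trans by metis
    qed
    show "\<pi> (f i) = f i \<or> \<pi> (f i) = 0"
      using f'pi pib fl fo i unfolding I'_def by (cases "i = l") auto
  qed
qed

lemma order_split:
  fixes x y z :: "'a::{finite,ab_group_add}"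
  assumes p: "prime p" and k: "1 \<le> k" and ox: "add_ord x = p^k"
    and spl: "\<And>n. nsmul n x = 0 \<longleftrightarrow> nsmul n y = 0 \<and> nsmul n z = 0"
  shows "add_ord y = p^k \<or> add_ord z = p^k"
proof (rule ccontr)
  assume h: "\<not> (add_ord y = p^k \<or> add_ord z = p^k)"
  have "nsmul (p^k) x = 0" using ox ord_nsmul[of x] by simp
  then have y0: "nsmul (p^k) y = 0" and z0: "nsmul (p^k) z = 0" using spl by auto
  have sub: "add_ord w dvd p^(k-1)" if "nsmul (p^k) w = 0" "add_ord w \<noteq> p^k" for w :: 'a
  proof -
    have "add_ord w dvd p^k" using that(1) by (simp add: nsmul_eq_0_iff)
    then obtain i where i: "i \<le> k" "add_ord w = p^i" using divides_primepow_nat[OF p] by blast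
    then have "i \<le> k - 1" using that(2) by (cases "i = k") auto
    then show ?thesis using i by (simp add: le_imp_power_dvd)
  qed
  have "nsmul (p^(k-1)) y = 0" using sub[OF y0] h by (simp add: nsmul_eq_0_iff)
  moreover have "nsmul (p^(k-1)) z = 0" using sub[OF z0] h by (simp add: nsmul_eq_0_iff)
  ultimately have "nsmul (p^(k-1)) x = 0" using spl by blast
  then have "p^k dvd p^(k-1)" using ox by (simp add: nsmul_eq_0_iff)
  moreover have "p^(k-1) < p^k" using k prime_gt_1_nat[OF p] by simp
  moreover have "p^(k-1) > 0" using prime_gt_1_nat[OF p] by simp
  ultimately show False by (meson dvd_imp_le not_le)
qed

lemma KL_n:
  "\<forall>I (e::nat \<Rightarrow> 'a::{finite,ab_group_add}) \<pi>. card I = n \<longrightarrow> good I e \<pi> \<longrightarrow> concl I e \<pi>"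
proof (induction n rule: less_induct)
  case (less n)
  show ?case
  proof (intro allI impI)
    fix I and e :: "nat \<Rightarrow> 'a" and \<pi> assume cI: "card I = n" and gd: "good I e \<pi>"
    have fin: "finite I" and ind: "indep I e" and ppI: "\<forall>i\<in>I. pp (e i)" and addp: "additive_endo \<pi>"
      and piS: "\<And>x. x \<in> span I e \<Longrightarrow> \<pi> x \<in> span I e"
      and piid: "\<And>x. x \<in> span I e \<Longrightarrow> \<pi> (\<pi> x) = \<pi> x"
      using gd unfolding good_def by auto
    show "concl I e \<pi>"
    proof (cases "I = {}")
      case True
      show ?thesis unfolding concl_def using ind sameord_refl True by blast
    next
      case False
      define M where "M = Max ((\<lambda>i. add_ord (e i)) ` I)"
      have "M \<in> (\<lambda>i. add_ord (e i)) ` I" unfolding M_def using fin False by (intro Max_in) auto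
      then obtain j where jI: "j \<in> I" and jM: "add_ord (e j) = M" by blast
      have jmax: "\<forall>i\<in>I. add_ord (e i) \<le> add_ord (e j)" unfolding jM M_def using fin by auto
      obtain p k where p: "prime p" and k: "1 \<le> k" and oj: "add_ord (e j) = p^k"
        using ppI jI unfolding pp_def by blast
      define S where "S = span I e"
      have ejS: "e j \<in> S" unfolding S_def using span_gen[OF fin jI] .
      have spl: "nsmul n (e j) = 0 \<longleftrightarrow> nsmul n (\<pi> (e j)) = 0 \<and> nsmul n (e j - \<pi> (e j)) = 0" for n
      proof
        assume h: "nsmul n (e j) = 0"
        have a: "nsmul n (\<pi> (e j)) = 0" using add_nsmul[OF addp, of n "e j"] h add_0[OF addp] by simp
        then show "nsmul n (\<pi> (e j)) = 0 \<and> nsmul n (e j - \<pi> (e j)) = 0" using h by (simp add: nsmul_diff)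
      next
        assume "nsmul n (\<pi> (e j)) = 0 \<and> nsmul n (e j - \<pi> (e j)) = 0"
        then show "nsmul n (e j) = 0" using nsmul_diff[of n "e j" "\<pi> (e j)"] by simp
      qed
      have "add_ord (\<pi> (e j)) = p^k \<or> add_ord (e j - \<pi> (e j)) = p^k"
        using order_split[OF p k oj] spl by blast
      then obtain \<rho> where rho: "\<rho> = \<pi> \<or> \<rho> = (\<lambda>x. x - \<pi> x)" and orho: "add_ord (\<rho> (e j)) = p^k"
        by blast
      have addr: "additive_endo \<rho>" using rho
      proof
        assume "\<rho> = (\<lambda>x. x - \<pi> x)"
        then show ?thesis unfolding additive_endo_def using add_plus[OF addp] by (simp add: algebra_simps)
      qed (simp add: addp)
      have rS: "\<rho> x \<in> S" if "x \<in> S" for x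
        using rho that piS unfolding S_def by (auto intro: span_diff)
      have rid: "\<rho> (\<rho> x) = \<rho> x" if x: "x \<in> S" for x
        using rho
      proof
        assume r: "\<rho> = (\<lambda>x. x - \<pi> x)"
        have "\<pi> (x - \<pi> x) = \<pi> x - \<pi> (\<pi> x)" by (rule add_diff[OF addp])
        also have "\<dots> = 0" using piid x unfolding S_def by simp
        finally show ?thesis unfolding r by simp
      qed (use piid x S_def in simp)
      define b where "b = \<rho> (e j)"
      have bS: "b \<in> S" unfolding b_def using rS ejS by blast
      have rb: "\<rho> b = b" unfolding b_def using rid ejS by blast
      have jmax': "\<forall>i\<in>I. add_ord (e i) \<le> p^k" using jmax oj by simp
      obtain l where lI: "l \<in> I" and ind': "indep I (e(l:=b))" and sp': "span I (e(l:=b)) = span I e"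
        and ol: "add_ord (e l) = p^k"
        using exchange[OF fin ind ppI jmax' p k bS[unfolded S_def] orho[folded b_def]] by blast
      define e' where "e' = e(l:=b)"
      have soe: "sameord (e' i) (e i)" for i
        unfolding e'_def using ol orho[folded b_def] by (cases "i = l") (auto intro: sameord_of_ord sameord_refl)
      have goode: "good I e' \<rho>" unfolding good_def
      proof (intro conjI ballI)
        show "finite I" by (rule fin)
        show "indep I e'" unfolding e'_def by (rule ind')
        fix i assume "i \<in> I" then show "pp (e' i)" using ppI soe pp_sameord by blast
      next
        show "additive_endo \<rho>" by (rule addr)
      next
        fix x assume "x \<in> span I e'" then show "\<rho> x \<in> span I e'" using rS sp' unfolding e'_def S_def by blast
      next
        fix x assume "x \<in> span I e'" then show "\<rho> (\<rho> x) = \<rho> x" using rid sp' unfolding e'_def S_def by blast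
      qed
      have el: "\<rho> (e' l) = e' l" unfolding e'_def using rb by simp
      have IH: "concl (I - {l}) g \<rho>" if "good (I - {l}) g \<rho>" for g
      proof -
        have "card (I - {l}) < n" using card_Diff1_less[OF fin lI] cI by simp
        then show ?thesis using less.IH that by blast
      qed
      have "concl I e' \<rho>" by (rule KL_core[OF goode lI el IH])
      then obtain f where find: "indep I f" and fsp: "span I f = span I e'"
        and fso: "\<forall>i\<in>I. sameord (f i) (e' i)" and frho: "\<forall>i\<in>I. \<rho> (f i) = f i \<or> \<rho> (f i) = 0"
        unfolding concl_def by blast
      show ?thesis unfolding concl_def
      proof (intro exI[of _ f] conjI ballI)
        show "indep I f" by (rule find)
        show "span I f = span I e" using fsp sp' unfolding e'_def by simp
      next
        fix i assume i: "i \<in> I"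
        show "sameord (f i) (e i)" using fso i soe sameord_trans by blast
        show "\<pi> (f i) = f i \<or> \<pi> (f i) = 0" using rho
        proof
          assume "\<rho> = \<pi>" then show ?thesis using frho i by simp
        next
          assume r: "\<rho> = (\<lambda>x. x - \<pi> x)"
          then have "f i - \<pi> (f i) = f i \<or> f i - \<pi> (f i) = 0" using frho i by simp
          then show ?thesis by auto
        qed
      qed
    qed
  qed
qed

lemma KL: "good I (e::nat \<Rightarrow> 'a::{finite,ab_group_add}) \<pi> \<Longrightarrow> concl I e \<pi>"
  using KL_n by blast

lemma ppc_props:
  fixes e :: "nat \<Rightarrow> 'a::{finite,ab_group_add}"
  assumes "ppc_basis r e"
  shows "indep {..<r} e" and "span {..<r} e = UNIV" and "\<forall>i\<in>{..<r}. pp (e i)"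
proof -
  have pp0: "\<forall>i<r. \<exists>p k. prime p \<and> 1 \<le> k \<and> add_ord (e i) = p ^ k"
    and un: "\<And>x. \<exists>!c::nat \<Rightarrow> nat. (\<forall>i<r. c i < add_ord (e i)) \<and> (\<forall>i\<ge>r. c i = 0) \<and>
            x = (\<Sum>i<r. nsmul (c i) (e i))"
    using assms unfolding ppc_basis_def by auto
  show "\<forall>i\<in>{..<r}. pp (e i)" using pp0 unfolding pp_def by auto
  show "span {..<r} e = UNIV"
  proof -
    have "x \<in> span {..<r} e" for x
    proof -
      obtain c where "x = (\<Sum>i<r. nsmul (c i) (e i))" using un[of x] by blast
      then show ?thesis unfolding span_def lin_def by blast
    qed
    then show ?thesis by blast
  qed
  show "indep {..<r} e" unfolding indep_def
  proof (intro allI impI ballI)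
    fix c i assume c: "lin {..<r} e c = 0" and i: "i \<in> {..<r}"
    define c' where "c' j = (if j < r then c j mod add_ord (e j) else 0)" for j
    have "lin {..<r} e c' = lin {..<r} e c" unfolding c'_def
      by (rule lin_cong) (simp add: nsmul_mod[symmetric])
    then have c'0: "0 = (\<Sum>i<r. nsmul (c' i) (e i))" using c unfolding lin_def by simp
    define Q where "Q d \<longleftrightarrow> (\<forall>i<r. d i < add_ord (e i)) \<and> (\<forall>i\<ge>r. d i = 0) \<and> (0::'a) = (\<Sum>i<r. nsmul (d i) (e i))" for d :: "nat \<Rightarrow> nat"
    have ex1: "\<exists>!d. Q d" unfolding Q_def by (rule un)
    have q1: "\<forall>i<r. c' i < add_ord (e i)" unfolding c'_def by (simp add: ord_pos)
    have q2: "\<forall>i\<ge>r. c' i = 0" unfolding c'_def by simp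
    have P1: "Q c'" unfolding Q_def using q1 q2 c'0 by blast
    have z: "(\<Sum>i<r. nsmul ((\<lambda>_::nat. 0::nat) i) (e i)) = (0::'a)" by simp
    have P2: "Q (\<lambda>_. 0)" unfolding Q_def using z by (simp add: ord_pos)
    have "c' = (\<lambda>_. 0)" using ex1 P1 P2 by (metis Ex1_def)
    then have "c i mod add_ord (e i) = 0" using i unfolding c'_def by (metis lessThan_iff)
    then show "nsmul (c i) (e i) = 0" using nsmul_mod[of "c i" "e i"] by simp
  qed
qed

lemma lin_split:
  assumes "finite I" "I1 \<subseteq> I"
  shows "lin I f c = lin I1 f c + lin (I - I1) f c"
proof -
  have "I = I1 \<union> (I - I1)" using assms by blast
  then have "lin I f c = lin (I1 \<union> (I - I1)) f c" by simp
  also have "\<dots> = lin I1 f c + lin (I - I1) f c" unfolding lin_def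
    using assms by (intro sum.union_disjoint) (auto intro: finite_subset)
  finally show ?thesis .
qed

lemma auto_from_basis:
  fixes e g :: "nat \<Rightarrow> 'a::{finite,ab_group_add}"
  assumes fin: "finite I" and inde: "indep I e" and spe: "span I e = UNIV" and indg: "indep I g"
    and so: "\<forall>i\<in>I. sameord (g i) (e i)"
  shows "\<exists>\<alpha>. additive_auto \<alpha> \<and> (\<forall>i\<in>I. \<alpha> (e i) = g i)"
proof -
  define crd where "crd x = (SOME c. x = lin I e c)" for x
  have crd: "x = lin I e (crd x)" for x
  proof -
    have "\<exists>c. x = lin I e c" using spe unfolding span_def by blast
    then show ?thesis unfolding crd_def by (rule someI_ex)
  qed
  have tr: "lin I e c = lin I e d \<longleftrightarrow> lin I g c = lin I g d" for c d
  proof -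
    have "lin I e c = lin I e d \<longleftrightarrow> (\<forall>i\<in>I. nsmul (c i) (e i) = nsmul (d i) (e i))" by (rule lin_eq[OF inde])
    also have "\<dots> \<longleftrightarrow> (\<forall>i\<in>I. nsmul (c i) (g i) = nsmul (d i) (g i))"
      using so sameord_eq by blast
    also have "\<dots> \<longleftrightarrow> lin I g c = lin I g d" by (rule lin_eq[OF indg, symmetric])
    finally show ?thesis .
  qed
  define \<alpha> where "\<alpha> x = lin I g (crd x)" for x
  have add: "additive_endo \<alpha>" unfolding additive_endo_def
  proof (intro allI)
    fix x y
    have "lin I e (crd (x + y)) = lin I e (\<lambda>i. crd x i + crd y i)"
      using crd[of "x+y"] crd[of x] crd[of y] by (simp add: lin_add)
    then have "lin I g (crd (x + y)) = lin I g (\<lambda>i. crd x i + crd y i)" using tr by blast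
    then show "\<alpha> (x + y) = \<alpha> x + \<alpha> y" unfolding \<alpha>_def by (simp add: lin_add)
  qed
  have ae: "\<alpha> (e i) = g i" if i: "i \<in> I" for i
  proof -
    have "lin I e (crd (e i)) = lin I e (\<lambda>j. if j = i then 1 else 0)"
      using crd[of "e i"] lin_single[OF fin i, of e] by simp
    then have "lin I g (crd (e i)) = lin I g (\<lambda>j. if j = i then 1 else 0)" using tr by blast
    then show ?thesis unfolding \<alpha>_def using lin_single[OF fin i, of g] by simp
  qed
  have "inj \<alpha>"
  proof (rule injI)
    fix x y assume "\<alpha> x = \<alpha> y"
    then have "lin I g (crd x) = lin I g (crd y)" unfolding \<alpha>_def .
    then have "lin I e (crd x) = lin I e (crd y)" using tr by blast
    then show "x = y" using crd[of x] crd[of y] by simp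
  qed
  moreover have "surj \<alpha>" using finite_UNIV_inj_surj[OF _ \<open>inj \<alpha>\<close>] by simp
  ultimately have "bij \<alpha>" by (simp add: bij_def)
  then show ?thesis using add ae unfolding additive_auto_def by blast
qed

lemma inv_additive:
  assumes "additive_auto \<alpha>"
  shows "additive_endo (inv \<alpha>)"
proof -
  have add: "additive_endo \<alpha>" and b: "bij \<alpha>" using assms unfolding additive_auto_def by auto
  show ?thesis unfolding additive_endo_def
  proof (intro allI)
    fix x y
    have "\<alpha> (inv \<alpha> x + inv \<alpha> y) = \<alpha> (inv \<alpha> x) + \<alpha> (inv \<alpha> y)" by (rule add_plus[OF add])
    also have "\<dots> = x + y" using b by (simp add: bij_is_surj surj_f_inv_f)
    finally show "inv \<alpha> (x + y) = inv \<alpha> x + inv \<alpha> y"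
      using b by (metis bij_is_inj inv_f_f)
  qed
qed

lemma diag_commute:
  fixes e :: "nat \<Rightarrow> 'a::{finite,ab_group_add}"
  assumes spe: "span {..<r} e = UNIV" and d1: "diagonal_endo r e \<delta>1" and d2: "diagonal_endo r e \<delta>2"
  shows "\<delta>1 (\<delta>2 x) = \<delta>2 (\<delta>1 x)"
proof -
  have a1: "additive_endo \<delta>1" and a2: "additive_endo \<delta>2"
    and dd1: "\<forall>i<r. \<exists>d::nat. \<delta>1 (e i) = nsmul d (e i)"
    and dd2: "\<forall>i<r. \<exists>d::nat. \<delta>2 (e i) = nsmul d (e i)"
    using d1 d2 unfolding diagonal_endo_def by auto
  obtain c where c: "x = lin {..<r} e c" using spe unfolding span_def by blast
  have "\<delta>1 (\<delta>2 (e i)) = \<delta>2 (\<delta>1 (e i))" if i: "i \<in> {..<r}" for i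
  proof -
    obtain u where u: "\<delta>1 (e i) = nsmul u (e i)" using dd1 i by blast
    obtain v where v: "\<delta>2 (e i) = nsmul v (e i)" using dd2 i by blast
    have "\<delta>1 (\<delta>2 (e i)) = nsmul v (nsmul u (e i))" using v u add_nsmul[OF a1, of v "e i"] by simp
    also have "\<dots> = nsmul u (nsmul v (e i))" by (metis mult.commute nsmul_mult)
    also have "\<dots> = \<delta>2 (\<delta>1 (e i))" using v u add_nsmul[OF a2, of u "e i"] by simp
    finally show ?thesis .
  qed
  then have "lin {..<r} (\<lambda>i. \<delta>1 (\<delta>2 (e i))) c = lin {..<r} (\<lambda>i. \<delta>2 (\<delta>1 (e i))) c"
    by (intro lin_cong) simp
  then show ?thesis unfolding c using lin_map[OF a1] lin_map[OF a2] by simp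
qed

theorem theorem5p9:
  fixes e :: "nat \<Rightarrow> 'a::{finite, ab_group_add}" and r :: nat
    and \<epsilon>1 \<epsilon>2 :: "'a \<Rightarrow> 'a"
  assumes "ppc_basis r e" and "additive_endo \<epsilon>1" and "additive_endo \<epsilon>2"
  shows "(idempotent_map \<epsilon>1 \<and> idempotent_map \<epsilon>2 \<and> \<epsilon>1 \<circ> \<epsilon>2 = \<epsilon>2 \<circ> \<epsilon>1) \<longleftrightarrow>
    (\<exists>\<delta>1 \<delta>2 \<alpha>. diagonal_endo r e \<delta>1 \<and> diagonal_endo r e \<delta>2 \<and>
        idempotent_map \<delta>1 \<and> idempotent_map \<delta>2 \<and> additive_auto \<alpha> \<and>
        inv \<alpha> \<circ> \<epsilon>1 \<circ> \<alpha> = \<delta>1 \<and> inv \<alpha> \<circ> \<epsilon>2 \<circ> \<alpha> = \<delta>2)"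
proof -
  define I where "I = {..<r}"
  have fin: "finite I" unfolding I_def by simp
  have inde: "indep I e" and spe: "span I e = UNIV" and ppe: "\<forall>i\<in>I. pp (e i)"
    using ppc_props[OF assms(1)] unfolding I_def by auto
  have add1: "additive_endo \<epsilon>1" and add2: "additive_endo \<epsilon>2" using assms by auto
  show ?thesis
  proof
    assume "idempotent_map \<epsilon>1 \<and> idempotent_map \<epsilon>2 \<and> \<epsilon>1 \<circ> \<epsilon>2 = \<epsilon>2 \<circ> \<epsilon>1"
    then have id1: "\<And>x. \<epsilon>1 (\<epsilon>1 x) = \<epsilon>1 x" and id2: "\<And>x. \<epsilon>2 (\<epsilon>2 x) = \<epsilon>2 x"
      and com: "\<And>x. \<epsilon>1 (\<epsilon>2 x) = \<epsilon>2 (\<epsilon>1 x)"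
      unfolding idempotent_map_def by (metis comp_apply)+
    have "good I e \<epsilon>1" unfolding good_def using fin inde ppe add1 id1 spe by simp
    then obtain f where indf: "indep I f" and spf: "span I f = UNIV" and sof: "\<forall>i\<in>I. sameord (f i) (e i)"
      and f1: "\<forall>i\<in>I. \<epsilon>1 (f i) = f i \<or> \<epsilon>1 (f i) = 0"
      using KL[of I e \<epsilon>1] spe unfolding concl_def by auto
    define I1 where "I1 = {i\<in>I. \<epsilon>1 (f i) = f i}"
    define I2 where "I2 = I - I1"
    have I1I: "I1 \<subseteq> I" and I2I: "I2 \<subseteq> I" unfolding I1_def I2_def by auto
    have fin1: "finite I1" and fin2: "finite I2" using I1I I2I fin by (auto intro: finite_subset)
    have f1i: "\<epsilon>1 (f i) = f i" if "i \<in> I1" for i using that unfolding I1_def by simp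
    have f2i: "\<epsilon>1 (f i) = 0" if "i \<in> I2" for i using that f1 unfolding I1_def I2_def by auto
    define S1 where "S1 = span I1 f"
    define S2 where "S2 = span I2 f"
    have on1: "\<epsilon>1 x = x" if xS: "x \<in> S1" for x
    proof -
      obtain c where c: "x = lin I1 f c" using xS unfolding S1_def span_def by blast
      have "\<epsilon>1 x = lin I1 (\<lambda>i. \<epsilon>1 (f i)) c" unfolding c by (rule lin_map[OF add1])
      also have "\<dots> = lin I1 f c" by (rule lin_cong) (simp add: f1i)
      finally show ?thesis using c by simp
    qed
    have on2: "\<epsilon>1 x = 0" if xS: "x \<in> S2" for x
    proof -
      obtain c where c: "x = lin I2 f c" using xS unfolding S2_def span_def by blast
      have "\<epsilon>1 x = lin I2 (\<lambda>i. \<epsilon>1 (f i)) c" unfolding c by (rule lin_map[OF add1])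
      also have "\<dots> = 0" by (rule lin_zero) (simp add: f2i)
      finally show ?thesis .
    qed
    have dec: "\<exists>a b. x = a + b \<and> a \<in> S1 \<and> b \<in> S2" for x
    proof -
      obtain c where "x = lin I f c" using spf unfolding span_def by blast
      then have "x = lin I1 f c + lin I2 f c" using lin_split[OF fin I1I] unfolding I2_def by simp
      then show ?thesis unfolding S1_def S2_def span_def by blast
    qed
    have fix1: "x \<in> S1" if ex: "\<epsilon>1 x = x" for x
    proof -
      obtain a b where ab: "x = a + b" "a \<in> S1" "b \<in> S2" using dec by blast
      have "\<epsilon>1 x = a" using ab on1 on2 add_plus[OF add1, of a b] by simp
      then show ?thesis using ex ab by simp
    qed
    have fix2: "x \<in> S2" if ex: "\<epsilon>1 x = 0" for x
    proof -
      obtain a b where ab: "x = a + b" "a \<in> S1" "b \<in> S2" using dec by blast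
      have "\<epsilon>1 x = a" using ab on1 on2 add_plus[OF add1, of a b] by simp
      then show ?thesis using ex ab by simp
    qed
    have m1: "\<epsilon>2 x \<in> S1" if "x \<in> S1" for x using fix1 com on1[OF that] by metis
    have m2: "\<epsilon>2 x \<in> S2" if "x \<in> S2" for x using fix2 com on2[OF that] add_0[OF add2] by metis
    have ppf: "\<forall>i\<in>I. pp (f i)" using sof ppe pp_sameord by blast
    have "good I1 f \<epsilon>2" unfolding good_def
      using fin1 indep_sub[OF fin indf I1I] ppf I1I add2 m1 id2 unfolding S1_def by blast
    then obtain g1 where indg1: "indep I1 g1" and spg1: "span I1 g1 = S1"
      and sog1: "\<forall>i\<in>I1. sameord (g1 i) (f i)" and g1e: "\<forall>i\<in>I1. \<epsilon>2 (g1 i) = g1 i \<or> \<epsilon>2 (g1 i) = 0"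
      using KL[of I1 f \<epsilon>2] unfolding concl_def S1_def by blast
    have "good I2 f \<epsilon>2" unfolding good_def
      using fin2 indep_sub[OF fin indf I2I] ppf I2I add2 m2 id2 unfolding S2_def by blast
    then obtain g2 where indg2: "indep I2 g2" and spg2: "span I2 g2 = S2"
      and sog2: "\<forall>i\<in>I2. sameord (g2 i) (f i)" and g2e: "\<forall>i\<in>I2. \<epsilon>2 (g2 i) = g2 i \<or> \<epsilon>2 (g2 i) = 0"
      using KL[of I2 f \<epsilon>2] unfolding concl_def S2_def by blast
    define g where "g i = (if i \<in> I1 then g1 i else g2 i)" for i
    have g1S: "g1 i \<in> S1" if "i \<in> I1" for i using span_gen[OF fin1 that, of g1] spg1 by simp
    have g2S: "g2 i \<in> S2" if "i \<in> I2" for i using span_gen[OF fin2 that, of g2] spg2 by simp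
    have sog: "\<forall>i\<in>I. sameord (g i) (e i)"
    proof
      fix i assume i: "i \<in> I"
      show "sameord (g i) (e i)"
      proof (cases "i \<in> I1")
        case True
        have "sameord (g1 i) (e i)" by (rule sameord_trans[OF bspec[OF sog1 True] bspec[OF sof i]])
        then show ?thesis unfolding g_def using True by simp
      next
        case False then have "i \<in> I2" using i unfolding I2_def by simp
        then have "sameord (g2 i) (e i)" by (rule sameord_trans[OF bspec[OF sog2] bspec[OF sof i]])
        then show ?thesis unfolding g_def using False by simp
      qed
    qed
    have e1g: "\<epsilon>1 (g i) = g i \<or> \<epsilon>1 (g i) = 0" if i: "i \<in> I" for i
    proof (cases "i \<in> I1")
      case True then show ?thesis unfolding g_def using on1 g1S by simp
    next
      case False then have "i \<in> I2" using i unfolding I2_def by simp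
      then show ?thesis unfolding g_def using False on2 g2S by simp
    qed
    have e2g: "\<epsilon>2 (g i) = g i \<or> \<epsilon>2 (g i) = 0" if i: "i \<in> I" for i
    proof (cases "i \<in> I1")
      case True then show ?thesis unfolding g_def using g1e by simp
    next
      case False then have "i \<in> I2" using i unfolding I2_def by simp
      then show ?thesis unfolding g_def using False g2e by simp
    qed
    have indg: "indep I g" unfolding indep_def
    proof (intro allI impI ballI)
      fix c i assume c0: "lin I g c = 0" and i: "i \<in> I"
      have la: "lin I1 g c = lin I1 g1 c" by (rule lin_cong) (simp add: g_def)
      have lb: "lin I2 g c = lin I2 g2 c" by (rule lin_cong) (simp add: g_def I2_def)
      have s: "lin I1 g1 c + lin I2 g2 c = 0" using c0 lin_split[OF fin I1I, of g c] la lb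
        unfolding I2_def by simp
      have aS: "lin I1 g1 c \<in> S1" unfolding spg1[symmetric] span_def by blast
      have bS: "lin I2 g2 c \<in> S2" unfolding spg2[symmetric] span_def by blast
      have "\<epsilon>1 (lin I1 g1 c + lin I2 g2 c) = lin I1 g1 c"
        using add_plus[OF add1] on1[OF aS] on2[OF bS] by simp
      then have a0: "lin I1 g1 c = 0" using s add_0[OF add1] by simp
      then have b0: "lin I2 g2 c = 0" using s by simp
      show "nsmul (c i) (g i) = 0"
      proof (cases "i \<in> I1")
        case True then show ?thesis unfolding g_def using indg1 a0 unfolding indep_def by simp
      next
        case False then have "i \<in> I2" using i unfolding I2_def by simp
        then show ?thesis unfolding g_def using False indg2 b0 unfolding indep_def by simp
      qed
    qed
    obtain \<alpha> where aa: "additive_auto \<alpha>" and ag: "\<forall>i\<in>I. \<alpha> (e i) = g i"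
      using auto_from_basis[OF fin inde spe indg sog] by blast
    have bij: "bij \<alpha>" using aa unfolding additive_auto_def by simp
    have ia: "inv \<alpha> (\<alpha> x) = x" for x using bij by (simp add: bij_is_inj)
    have ai: "\<alpha> (inv \<alpha> y) = y" for y using bij by (simp add: bij_is_surj surj_f_inv_f)
    have invadd: "additive_endo (inv \<alpha>)" by (rule inv_additive[OF aa])
    have adda: "additive_endo \<alpha>" using aa unfolding additive_auto_def by simp
    have diag: "diagonal_endo r e (inv \<alpha> \<circ> \<epsilon> \<circ> \<alpha>)"
      if adde: "additive_endo \<epsilon>" and eg: "\<And>i. i \<in> I \<Longrightarrow> \<epsilon> (g i) = g i \<or> \<epsilon> (g i) = 0" for \<epsilon>
      unfolding diagonal_endo_def
    proof (intro conjI allI impI)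
      show "additive_endo (inv \<alpha> \<circ> \<epsilon> \<circ> \<alpha>)" by (intro additive_comp invadd adde adda)
      fix i assume "i < r"
      then have i: "i \<in> I" unfolding I_def by simp
      have "(inv \<alpha> \<circ> \<epsilon> \<circ> \<alpha>) (e i) = inv \<alpha> (\<epsilon> (g i))" using ag i by simp
      show "\<exists>d. (inv \<alpha> \<circ> \<epsilon> \<circ> \<alpha>) (e i) = nsmul d (e i)"
        using eg[OF i]
      proof
        assume "\<epsilon> (g i) = g i"
        then have "(inv \<alpha> \<circ> \<epsilon> \<circ> \<alpha>) (e i) = e i"
          using \<open>(inv \<alpha> \<circ> \<epsilon> \<circ> \<alpha>) (e i) = inv \<alpha> (\<epsilon> (g i))\<close> ag i ia by metis
        then show ?thesis by (intro exI[of _ 1]) simp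
      next
        assume "\<epsilon> (g i) = 0"
        then have "(inv \<alpha> \<circ> \<epsilon> \<circ> \<alpha>) (e i) = 0"
          using \<open>(inv \<alpha> \<circ> \<epsilon> \<circ> \<alpha>) (e i) = inv \<alpha> (\<epsilon> (g i))\<close> add_0[OF invadd] by simp
        then show ?thesis by (intro exI[of _ 0]) simp
      qed
    qed
    have idem: "idempotent_map (inv \<alpha> \<circ> \<epsilon> \<circ> \<alpha>)" if "\<And>x. \<epsilon> (\<epsilon> x) = \<epsilon> x" for \<epsilon>
      unfolding idempotent_map_def by (rule ext) (simp add: ai that)
    show "\<exists>\<delta>1 \<delta>2 \<alpha>. diagonal_endo r e \<delta>1 \<and> diagonal_endo r e \<delta>2 \<and>
        idempotent_map \<delta>1 \<and> idempotent_map \<delta>2 \<and> additive_auto \<alpha> \<and>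
        inv \<alpha> \<circ> \<epsilon>1 \<circ> \<alpha> = \<delta>1 \<and> inv \<alpha> \<circ> \<epsilon>2 \<circ> \<alpha> = \<delta>2"
      using diag[OF add1 e1g] diag[OF add2 e2g] idem[OF id1] idem[OF id2] aa by blast
  next
    assume "\<exists>\<delta>1 \<delta>2 \<alpha>. diagonal_endo r e \<delta>1 \<and> diagonal_endo r e \<delta>2 \<and>
        idempotent_map \<delta>1 \<and> idempotent_map \<delta>2 \<and> additive_auto \<alpha> \<and>
        inv \<alpha> \<circ> \<epsilon>1 \<circ> \<alpha> = \<delta>1 \<and> inv \<alpha> \<circ> \<epsilon>2 \<circ> \<alpha> = \<delta>2"
    then obtain \<delta>1 \<delta>2 \<alpha> where d1: "diagonal_endo r e \<delta>1" and d2: "diagonal_endo r e \<delta>2"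
      and i1: "idempotent_map \<delta>1" and i2: "idempotent_map \<delta>2" and aa: "additive_auto \<alpha>"
      and c1: "inv \<alpha> \<circ> \<epsilon>1 \<circ> \<alpha> = \<delta>1" and c2: "inv \<alpha> \<circ> \<epsilon>2 \<circ> \<alpha> = \<delta>2" by blast
    have bij: "bij \<alpha>" using aa unfolding additive_auto_def by simp
    have ia: "inv \<alpha> (\<alpha> x) = x" for x using bij by (simp add: bij_is_inj)
    have ai: "\<alpha> (inv \<alpha> y) = y" for y using bij by (simp add: bij_is_surj surj_f_inv_f)
    have r1: "\<epsilon>1 y = \<alpha> (\<delta>1 (inv \<alpha> y))" for y
    proof -
      have "\<delta>1 (inv \<alpha> y) = inv \<alpha> (\<epsilon>1 (\<alpha> (inv \<alpha> y)))" using c1 by (metis comp_apply)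
      then show ?thesis using ai by simp
    qed
    have r2: "\<epsilon>2 y = \<alpha> (\<delta>2 (inv \<alpha> y))" for y
    proof -
      have "\<delta>2 (inv \<alpha> y) = inv \<alpha> (\<epsilon>2 (\<alpha> (inv \<alpha> y)))" using c2 by (metis comp_apply)
      then show ?thesis using ai by simp
    qed
    have dd1: "\<delta>1 (\<delta>1 x) = \<delta>1 x" for x using i1 unfolding idempotent_map_def by (metis comp_apply)
    have dd2: "\<delta>2 (\<delta>2 x) = \<delta>2 x" for x using i2 unfolding idempotent_map_def by (metis comp_apply)
    have spe': "span {..<r} e = UNIV" using spe unfolding I_def .
    have dc: "\<delta>1 (\<delta>2 x) = \<delta>2 (\<delta>1 x)" for x by (rule diag_commute[OF spe' d1 d2])
    show "idempotent_map \<epsilon>1 \<and> idempotent_map \<epsilon>2 \<and> \<epsilon>1 \<circ> \<epsilon>2 = \<epsilon>2 \<circ> \<epsilon>1"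
      unfolding idempotent_map_def
    proof (intro conjI ext)
      fix y show "(\<epsilon>1 \<circ> \<epsilon>1) y = \<epsilon>1 y" by (simp add: r1 ia dd1)
    next
      fix y show "(\<epsilon>2 \<circ> \<epsilon>2) y = \<epsilon>2 y" by (simp add: r2 ia dd2)
    next
      fix y show "(\<epsilon>1 \<circ> \<epsilon>2) y = (\<epsilon>2 \<circ> \<epsilon>1) y" by (simp add: r1 r2 ia dc)
    qed
  qed
qed

end
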